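(* Let $n\ge 1$ and let $f:\{0,1\}^n\to\{0,1\}^n$. If $G_f$ is topologically transitive on $(\mathcal{X},d)$, then $G_f$ is regular, i.e. the set of periodic points of $G_f$ is dense in $(\mathcal{X},d)$. In other words, $\mathcal{T}\subset\mathcal{R}$, where $\mathcal{T}$ is the set of maps $f:\{0,1\}^n\to\{0,1\}^n$ with $G_f$ transitive and $\mathcal{R}$ the set of such maps with $G_f$ regular.
   Context: Write $\mathbb{B}=\{0,1\}$ and $\llbracket 1;n\rrbracket=\{1,\dots,n\}$. For $f=(f_1,\dots,f_n):\mathbb{B}^n\to\mathbb{B}^n$, define $F_f(i,x)=(x_1,\dots,x_{i-1},f_i(x),x_{i+1},\dots,x_n)$ for $i\in\llbracket 1;n\rrbracket$, $x\in\mathbb{B}^n$. Let $\mathcal{X}=\llbracket 1;n\rrbracket^{\mathbb{N}}\times\mathbb{B}^n$ and $G_f(s,x)=(\sigma(s),F_f(s_0,x))$ where $\sigma(s)_t=s_{t+1}$. The metric is $d((s,x),(s',x'))=\sum_{i=1}^n|x_i-x'_i|+\frac{9}{n}\sum_{t\in\mathbb{N}}\frac{|s_t-s'_t|}{10^{t+1}}$. $G_f$ is topologically transitive if for all $X,Y\in\mathcal{X}$ and all open balls $B_X,B_Y$ centered at $X,Y$, there exist $X'\in B_X$ and $t\in\mathbb{N}$ with $G_f^t(X')\in B_Y$. A point $X$ is periodic if $G_f^p(X)=X$ for some $p\ge 1$. *)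

theory Defs
  imports "HOL-Analysis.Analysis"
begin

text \<open>Points of B^n are boolean functions on nat that vanish outside {1..n};
strategies are sequences nat => nat with values in {1..n}.\<close>

definition Bn :: "nat \<Rightarrow> (nat \<Rightarrow> bool) set" where
  "Bn n = {x. \<forall>i. i \<notin> {1..n} \<longrightarrow> \<not> x i}"

definition Xspace :: "nat \<Rightarrow> ((nat \<Rightarrow> nat) \<times> (nat \<Rightarrow> bool)) set" where
  "Xspace n = {(s, x). (\<forall>t. s t \<in> {1..n}) \<and> x \<in> Bn n}"

definition Ff :: "((nat \<Rightarrow> bool) \<Rightarrow> (nat \<Rightarrow> bool)) \<Rightarrow> nat \<Rightarrow> (nat \<Rightarrow> bool) \<Rightarrow> (nat \<Rightarrow> bool)" where
  "Ff f i x = x(i := f x i)"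

definition Gf :: "((nat \<Rightarrow> bool) \<Rightarrow> (nat \<Rightarrow> bool)) \<Rightarrow>
    (nat \<Rightarrow> nat) \<times> (nat \<Rightarrow> bool) \<Rightarrow> (nat \<Rightarrow> nat) \<times> (nat \<Rightarrow> bool)" where
  "Gf f X = (\<lambda>t. fst X (Suc t), Ff f (fst X 0) (snd X))"

definition dX :: "nat \<Rightarrow> (nat \<Rightarrow> nat) \<times> (nat \<Rightarrow> bool) \<Rightarrow> (nat \<Rightarrow> nat) \<times> (nat \<Rightarrow> bool) \<Rightarrow> real" where
  "dX n X Y = (\<Sum>i = 1..n. (if snd X i = snd Y i then 0 else 1))
     + 9 / real n * (\<Sum>t. \<bar>real (fst X t) - real (fst Y t)\<bar> / 10 ^ (t + 1))"

definition topologically_transitive :: "nat \<Rightarrow> ((nat \<Rightarrow> bool) \<Rightarrow> (nat \<Rightarrow> bool)) \<Rightarrow> bool" where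
  "topologically_transitive n f \<longleftrightarrow>
     (\<forall>X\<in>Xspace n. \<forall>Y\<in>Xspace n. \<forall>rX>0. \<forall>rY>0.
        \<exists>X'\<in>Xspace n. dX n X X' < rX \<and> (\<exists>t. dX n Y ((Gf f ^^ t) X') < rY))"

definition periodic_point :: "nat \<Rightarrow> ((nat \<Rightarrow> bool) \<Rightarrow> (nat \<Rightarrow> bool)) \<Rightarrow>
    (nat \<Rightarrow> nat) \<times> (nat \<Rightarrow> bool) \<Rightarrow> bool" where
  "periodic_point n f X \<longleftrightarrow> X \<in> Xspace n \<and> (\<exists>p\<ge>1. (Gf f ^^ p) X = X)"

definition regular :: "nat \<Rightarrow> ((nat \<Rightarrow> bool) \<Rightarrow> (nat \<Rightarrow> bool)) \<Rightarrow> bool" where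
  "regular n f \<longleftrightarrow>
     (\<forall>X\<in>Xspace n. \<forall>r>0. \<exists>P. periodic_point n f P \<and> dX n X P < r)"

end

theory Submission
  imports Defs
begin

lemma fst_iter: "fst ((Gf f ^^ m) X) = (\<lambda>j. fst X (j + m))"
  by (induction m) (auto simp: Gf_def)

lemma snd_iter_Suc: "snd ((Gf f ^^ Suc m) X) = Ff f (fst X m) (snd ((Gf f ^^ m) X))"
  by (simp add: Gf_def fst_iter)

lemma snd_cong:
  "(\<forall>j<m. fst X j = fst Y j) \<Longrightarrow> snd X = snd Y \<Longrightarrow> snd ((Gf f ^^ m) X) = snd ((Gf f ^^ m) Y)"
proof (induction m)
  case 0 then show ?case by simp
next
  case (Suc m) then show ?case by (simp only: snd_iter_Suc) simp
qed

lemma Bn_iter: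
  assumes "X \<in> Xspace n" shows "snd ((Gf f ^^ m) X) \<in> Bn n"
proof (induction m)
  case 0 then show ?case using assms by (auto simp: Xspace_def)
next
  case (Suc m)
  have "fst X m \<in> {1..n}" using assms by (auto simp: Xspace_def)
  then show ?case using Suc unfolding snd_iter_Suc by (auto simp: Bn_def Ff_def)
qed

lemma Xspace_iter:
  assumes "X \<in> Xspace n" shows "(Gf f ^^ m) X \<in> Xspace n"
proof -
  have "(Gf f ^^ m) X = (fst ((Gf f ^^ m) X), snd ((Gf f ^^ m) X))" by simp
  moreover have "\<forall>t. fst ((Gf f ^^ m) X) t \<in> {1..n}" using assms by (auto simp: fst_iter Xspace_def)
  ultimately show ?thesis using Bn_iter[OF assms, where f=f and m=m] unfolding Xspace_def
    by (cases "(Gf f ^^ m) X") simp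
qed

lemma term_bound:
  assumes "X \<in> Xspace n" "Y \<in> Xspace n"
  shows "\<bar>real (fst X t) - real (fst Y t)\<bar> / 10 ^ (t + 1) \<le> real n * (1/10) ^ (t+1)"
proof -
  have "fst X t \<in> {1..n}" "fst Y t \<in> {1..n}" using assms by (auto simp: Xspace_def)
  then have "\<bar>real (fst X t) - real (fst Y t)\<bar> \<le> real n" by auto
  then show ?thesis by (simp add: divide_right_mono power_one_over field_simps)
qed

lemma term_summable:
  assumes "X \<in> Xspace n" "Y \<in> Xspace n"
  shows "summable (\<lambda>t. \<bar>real (fst X t) - real (fst Y t)\<bar> / 10 ^ (t + 1))"
proof (rule summable_comparison_test'[where g = "\<lambda>t. real n * (1/10) ^ (t+1)"])
  show "summable (\<lambda>t. real n * (1/10) ^ (t+1))"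
    by (intro summable_mult summable_ignore_initial_segment[where k=1, simplified] summable_geometric) simp
  show "norm (\<bar>real (fst X t) - real (fst Y t)\<bar> / 10 ^ (t + 1)) \<le> real n * (1/10) ^ (t+1)" for t
    using term_bound[OF assms] by simp
qed

lemma close_snd:
  assumes "X \<in> Xspace n" "Y \<in> Xspace n" "dX n X Y < 1"
  shows "snd X = snd Y"
proof (rule ccontr)
  assume "snd X \<noteq> snd Y"
  then obtain i where i: "snd X i \<noteq> snd Y i" by auto
  have "i \<in> {1..n}" using i assms(1,2) by (cases "i \<in> {1..n}") (auto simp: Xspace_def Bn_def)
  then have "1 \<le> (\<Sum>i = 1..n. (if snd X i = snd Y i then 0 else 1::real))"
    using i by (intro member_le_sum[where i=i, THEN order_trans[rotated]]) auto
  moreover have "0 \<le> 9 / real n * (\<Sum>t. \<bar>real (fst X t) - real (fst Y t)\<bar> / 10 ^ (t + 1))"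
    by (intro mult_nonneg_nonneg suminf_nonneg term_summable[OF assms(1,2)]) auto
  ultimately show False using assms(3) unfolding dX_def by linarith
qed


lemma geo_sum: "(\<Sum>t. c * (1/5::real) ^ (t+1)) = c / 4"
proof -
  have "(\<lambda>t. c * (1/5::real) ^ (t+1)) sums (c * (1/5) * (1 / (1 - 1/5)))"
    using sums_mult[OF geometric_sums[of "1/5::real"], of "c * (1/5)"] by (simp add: mult.assoc)
  then show ?thesis by (simp add: sums_iff)
qed

theorem proposition2:
  fixes n :: nat and f :: "(nat \<Rightarrow> bool) \<Rightarrow> (nat \<Rightarrow> bool)"
  assumes "n \<ge> 1"
    and "\<forall>x\<in>Bn n. f x \<in> Bn n"
    and "topologically_transitive n f"
  shows "regular n f"
  unfolding regular_def
proof (intro ballI allI impI)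
  fix X r assume XS: "X \<in> Xspace n" and r: "(0::real) < r"
  obtain s x where Xsx: "X = (s, x)" by fastforce
  have sn: "\<forall>j. s j \<in> {1..n}" and xB: "x \<in> Bn n" using XS Xsx by (auto simp: Xspace_def)
  obtain k0 where k0: "(1/2::real) ^ k0 < 4 * r / 9" using real_arch_pow_inv[of "4*r/9" "1/2::real"] r by auto
  define k where "k = Suc k0"
  have k1: "k \<ge> 1" by (simp add: k_def)
  have kr: "9/4 * (1/2::real) ^ k < r"
  proof -
    have "(1/2::real) ^ k \<le> (1/2) ^ k0" unfolding k_def by (intro power_decreasing) auto
    with k0 show ?thesis by linarith
  qed
  define y where "y = snd ((Gf f ^^ k) X)"
  have yB: "y \<in> Bn n" unfolding y_def using Bn_iter[OF XS] .
  have Y0: "(s, y) \<in> Xspace n" using sn yB by (simp add: Xspace_def)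
  obtain X' t where X'S: "X' \<in> Xspace n" and d1: "dX n (s, y) X' < 1/2"
      and d2: "dX n X ((Gf f ^^ t) X') < 1/2"
  proof -
    have "\<exists>X'\<in>Xspace n. dX n (s, y) X' < 1/2 \<and> (\<exists>t. dX n X ((Gf f ^^ t) X') < 1/2)"
      using assms(3)[unfolded topologically_transitive_def, rule_format, OF Y0 XS, of "1/2" "1/2"] by simp
    then show ?thesis using that by blast
  qed
  have sX': "snd X' = y" using close_snd[OF Y0 X'S] d1 by simp
  have sXt: "snd ((Gf f ^^ t) X') = x"
    using close_snd[OF XS Xspace_iter[OF X'S]] d2 Xsx by simp
  define p where "p = t + k"
  have p1: "p \<ge> 1" "k \<le> p" using k1 by (auto simp: p_def)
  define w where "w j = (if j mod p < k then s (j mod p) else fst X' (j mod p - k))" for j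
  define P where "P = (w, x)"
  have wn: "w j \<in> {1..n}" for j
    using sn X'S unfolding w_def by (auto simp: Xspace_def)
  have PS: "P \<in> Xspace n" using wn xB by (simp add: P_def Xspace_def)
  have wlow: "w j = s j" if "j < k" for j
    using that p1 by (simp add: w_def)
  have whigh: "w (j + k) = fst X' j" if "j < t" for j
    using that by (simp add: w_def p_def)
  have wper: "w (j + p) = w j" for j by (simp add: w_def)
  define Q where "Q = (Gf f ^^ k) P"
  have fQ: "fst Q = (\<lambda>j. w (j + k))" by (simp add: Q_def fst_iter P_def)
  have sQ: "snd Q = y" unfolding Q_def y_def Xsx
    by (rule snd_cong) (auto simp: P_def wlow)
  have "snd ((Gf f ^^ t) Q) = snd ((Gf f ^^ t) X')"
    by (rule snd_cong) (auto simp: fQ whigh sQ sX')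
  then have s2: "snd ((Gf f ^^ t) Q) = x" using sXt by simp
  have f2: "fst ((Gf f ^^ t) Q) = w"
  proof (rule ext)
    fix j
    have "fst ((Gf f ^^ t) Q) j = w ((j + t) + k)" by (simp add: fst_iter fQ)
    also have "(j + t) + k = j + p" by (simp add: p_def)
    finally show "fst ((Gf f ^^ t) Q) j = w j" using wper by simp
  qed
  have "(Gf f ^^ p) P = (Gf f ^^ t) Q" by (simp add: p_def Q_def funpow_add)
  also have "\<dots> = P" using s2 f2 by (simp add: P_def prod_eq_iff)
  finally have per: "(Gf f ^^ p) P = P" .
  have PP: "periodic_point n f P" unfolding periodic_point_def using PS per p1 by blast
  define c where "c = real n * (1/2) ^ k"
  have tb: "\<bar>real (fst X j) - real (fst P j)\<bar> / 10 ^ (j + 1) \<le> c * (1/5) ^ (j+1)" for j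
  proof (cases "j < k")
    case True then show ?thesis by (simp add: Xsx P_def wlow c_def)
  next
    case False
    have "\<bar>real (fst X j) - real (fst P j)\<bar> / 10 ^ (j + 1) \<le> real n * (1/10) ^ (j+1)"
      by (rule term_bound[OF XS PS])
    also have "(1/10::real) ^ (j+1) = (1/2) ^ (j+1) * (1/5) ^ (j+1)"
      by (simp add: power_mult_distrib[symmetric])
    also have "(1/2::real) ^ (j+1) \<le> (1/2) ^ k" using False by (intro power_decreasing) auto
    then have "real n * ((1/2::real) ^ (j+1) * (1/5) ^ (j+1)) \<le> real n * ((1/2) ^ k * (1/5) ^ (j+1))"
      by (intro mult_left_mono mult_right_mono) auto
    finally show ?thesis by (simp add: c_def mult.assoc)
  qed
  have sumle: "(\<Sum>j. \<bar>real (fst X j) - real (fst P j)\<bar> / 10 ^ (j + 1)) \<le> c / 4"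
    unfolding geo_sum[symmetric]
    by (rule suminf_le[OF tb term_summable[OF XS PS]])
       (intro summable_mult summable_ignore_initial_segment[where k=1, simplified] summable_geometric, simp)
  have npos: "real n > 0" using assms(1) by simp
  have "dX n X P = 9 / real n * (\<Sum>j. \<bar>real (fst X j) - real (fst P j)\<bar> / 10 ^ (j + 1))"
    by (simp add: dX_def Xsx P_def)
  also have "\<dots> \<le> 9 / real n * (c / 4)"
    using sumle npos by (intro mult_left_mono) auto
  also have "\<dots> = 9/4 * (1/2) ^ k" using npos by (simp add: c_def)
  finally have "dX n X P < r" using kr by linarith
  then show "\<exists>P. periodic_point n f P \<and> dX n X P < r" using PP by blast
qed

end
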